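(* Graphs $G=(U,\alpha)$ and $H=(V,\beta)$ are weakly disjoint if and only if they are $c$-disjoint for every cost function $c:U\times V\to[0,\infty)$.
   Context: A weight function on finite $U$ is $\alpha:U\times U\to\mathbb{R}$, $\alpha\ge0$, symmetric, summing to $1$; degree $p(u)=\sum_{u'}\alpha(u,u')$; a graph is $(U,\alpha)$. For graphs $(U,\alpha)$, $(V,\beta)$ with degrees $p,q$, a weight joining is a weight function $\gamma$ on $U\times V$ with degree $r(u,v)=\sum_{(u',v')}\gamma((u,v),(u',v'))$ such that $\sum_v r(u,v)=p(u)$, $\sum_u r(u,v)=q(v)$, $p(u)\sum_{\tilde v}\gamma((u,v),(u',\tilde v))=\alpha(u,u')r(u,v)$ and $q(v)\sum_{\tilde u}\gamma((u,v),(\tilde u,v'))=\beta(v,v')r(u,v)$ for all $u,u',v,v'$; a graph joining is $K=(U\times V,\gamma)$ with $\gamma$ a weight joining, with degree function $r_K$. The graphs are weakly disjoint if every graph joining has $r_K(u,v)=p(u)q(v)$. They are $c$-disjoint for $c:U\times V\to[0,\infty)$ if $\min_K\sum_{(u,v)}c(u,v)r_K(u,v)=\sum_{(u,v)}c(u,v)p(u)q(v)$, the minimum over all graph joinings $K$. *)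

theory Defs
  imports Complex_Main
begin

definition weight_fun :: "('a::finite \<Rightarrow> 'a \<Rightarrow> real) \<Rightarrow> bool" where
  "weight_fun \<alpha> \<longleftrightarrow> (\<forall>x y. \<alpha> x y \<ge> 0) \<and> (\<forall>x y. \<alpha> x y = \<alpha> y x)
     \<and> (\<Sum>x\<in>UNIV. \<Sum>y\<in>UNIV. \<alpha> x y) = 1"

definition degree :: "('a::finite \<Rightarrow> 'a \<Rightarrow> real) \<Rightarrow> 'a \<Rightarrow> real" where
  "degree \<alpha> u = (\<Sum>u'\<in>UNIV. \<alpha> u u')"

definition weight_joining ::
  "('u::finite \<Rightarrow> 'u \<Rightarrow> real) \<Rightarrow> ('v::finite \<Rightarrow> 'v \<Rightarrow> real)
     \<Rightarrow> ('u \<times> 'v \<Rightarrow> 'u \<times> 'v \<Rightarrow> real) \<Rightarrow> bool" where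
  "weight_joining \<alpha> \<beta> \<gamma> \<longleftrightarrow> weight_fun \<gamma>
     \<and> (\<forall>u. (\<Sum>v\<in>UNIV. degree \<gamma> (u, v)) = degree \<alpha> u)
     \<and> (\<forall>v. (\<Sum>u\<in>UNIV. degree \<gamma> (u, v)) = degree \<beta> v)
     \<and> (\<forall>u u' v. degree \<alpha> u * (\<Sum>v'\<in>UNIV. \<gamma> (u, v) (u', v'))
                    = \<alpha> u u' * degree \<gamma> (u, v))
     \<and> (\<forall>u v v'. degree \<beta> v * (\<Sum>u'\<in>UNIV. \<gamma> (u, v) (u', v'))
                    = \<beta> v v' * degree \<gamma> (u, v))"

definition weakly_disjoint ::
  "('u::finite \<Rightarrow> 'u \<Rightarrow> real) \<Rightarrow> ('v::finite \<Rightarrow> 'v \<Rightarrow> real) \<Rightarrow> bool" where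
  "weakly_disjoint \<alpha> \<beta> \<longleftrightarrow> (\<forall>\<gamma>. weight_joining \<alpha> \<beta> \<gamma> \<longrightarrow>
     (\<forall>u v. degree \<gamma> (u, v) = degree \<alpha> u * degree \<beta> v))"

definition joining_cost ::
  "('u::finite \<times> 'v::finite \<Rightarrow> real) \<Rightarrow> ('u \<times> 'v \<Rightarrow> 'u \<times> 'v \<Rightarrow> real) \<Rightarrow> real" where
  "joining_cost c \<gamma> = (\<Sum>x\<in>UNIV. c x * degree \<gamma> x)"

definition c_disjoint ::
  "('u::finite \<Rightarrow> 'u \<Rightarrow> real) \<Rightarrow> ('v::finite \<Rightarrow> 'v \<Rightarrow> real) \<Rightarrow> ('u \<times> 'v \<Rightarrow> real) \<Rightarrow> bool" where
  "c_disjoint \<alpha> \<beta> c \<longleftrightarrow>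
     (let m = (\<Sum>(u, v)\<in>UNIV. c (u, v) * degree \<alpha> u * degree \<beta> v) in
       (\<exists>\<gamma>. weight_joining \<alpha> \<beta> \<gamma> \<and> joining_cost c \<gamma> = m)
       \<and> (\<forall>\<gamma>. weight_joining \<alpha> \<beta> \<gamma> \<longrightarrow> m \<le> joining_cost c \<gamma>))"

end

theory Submission
  imports Defs
begin

lemma sum_UNIV_prod:
  "sum (f :: ('a::finite \<times> 'b::finite) \<Rightarrow> real) UNIV = (\<Sum>a\<in>UNIV. \<Sum>b\<in>UNIV. f (a, b))"
proof -
  have "sum f UNIV = sum f (UNIV \<times> UNIV)" by simp
  also have "\<dots> = (\<Sum>a\<in>UNIV. \<Sum>b\<in>UNIV. f (a, b))"
    by (simp add: sum.cartesian_product)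
  finally show ?thesis .
qed

lemma degree_prod:
  fixes \<alpha> :: "'u::finite \<Rightarrow> 'u \<Rightarrow> real" and \<beta> :: "'v::finite \<Rightarrow> 'v \<Rightarrow> real"
  shows "degree (\<lambda>(u,v) (u',v'). \<alpha> u u' * \<beta> v v') (u, v) = degree \<alpha> u * degree \<beta> v"
  unfolding degree_def
  by (simp add: sum_UNIV_prod sum_product)

lemma prod_joining:
  fixes \<alpha> :: "'u::finite \<Rightarrow> 'u \<Rightarrow> real" and \<beta> :: "'v::finite \<Rightarrow> 'v \<Rightarrow> real"
  assumes a: "weight_fun \<alpha>" and b: "weight_fun \<beta>"
  shows "weight_joining \<alpha> \<beta> (\<lambda>(u,v) (u',v'). \<alpha> u u' * \<beta> v v')"
proof -
  have sa: "(\<Sum>u\<in>UNIV. degree \<alpha> u) = 1" using a by (simp add: weight_fun_def degree_def)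
  have sb: "(\<Sum>u\<in>UNIV. degree \<beta> u) = 1" using b by (simp add: weight_fun_def degree_def)
  have wf: "weight_fun (\<lambda>(u,v) (u',v'). \<alpha> u u' * \<beta> v v')"
    unfolding weight_fun_def
  proof (intro conjI allI)
    fix x y :: "'u \<times> 'v"
    show "0 \<le> (case x of (u, v) \<Rightarrow> \<lambda>(u', v'). \<alpha> u u' * \<beta> v v') y"
      using a b by (auto simp: weight_fun_def split: prod.splits)
    show "(case x of (u, v) \<Rightarrow> \<lambda>(u', v'). \<alpha> u u' * \<beta> v v') y = (case y of (u, v) \<Rightarrow> \<lambda>(u', v'). \<alpha> u u' * \<beta> v v') x"
      using a b by (auto simp: weight_fun_def split: prod.splits)
  next
    have "(\<Sum>x\<in>UNIV. \<Sum>y\<in>UNIV. (case x of (u, v) \<Rightarrow> \<lambda>(u', v'). \<alpha> u u' * \<beta> v v') y)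
       = (\<Sum>x\<in>UNIV. degree (\<lambda>(u,v) (u',v'). \<alpha> u u' * \<beta> v v') x)"
      by (simp add: degree_def)
    also have "\<dots> = (\<Sum>u\<in>UNIV. \<Sum>v\<in>UNIV. degree \<alpha> u * degree \<beta> v)"
      by (simp add: sum_UNIV_prod degree_prod del: split_paired_all)
    also have "\<dots> = 1" using sa sb by (simp add: sum_product[symmetric])
    finally show "(\<Sum>x\<in>UNIV. \<Sum>y\<in>UNIV. (case x of (u, v) \<Rightarrow> \<lambda>(u', v'). \<alpha> u u' * \<beta> v v') y) = 1" .
  qed
  show ?thesis
    unfolding weight_joining_def
    using wf
    by (simp add: degree_prod sum_distrib_left[symmetric] sum_distrib_right[symmetric] sa sb)
       (simp add: degree_def sum_distrib_left[symmetric] sum_distrib_right[symmetric])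
qed

theorem proposition3p2:
  fixes \<alpha> :: "'u::finite \<Rightarrow> 'u \<Rightarrow> real" and \<beta> :: "'v::finite \<Rightarrow> 'v \<Rightarrow> real"
  assumes "weight_fun \<alpha>" and "weight_fun \<beta>"
  shows "weakly_disjoint \<alpha> \<beta> \<longleftrightarrow>
           (\<forall>c :: 'u \<times> 'v \<Rightarrow> real. (\<forall>x. c x \<ge> 0) \<longrightarrow> c_disjoint \<alpha> \<beta> c)"
proof
  assume wd: "weakly_disjoint \<alpha> \<beta>"
  show "\<forall>c :: 'u \<times> 'v \<Rightarrow> real. (\<forall>x. c x \<ge> 0) \<longrightarrow> c_disjoint \<alpha> \<beta> c"
  proof (intro allI impI)
    fix c :: "'u \<times> 'v \<Rightarrow> real"
    let ?m = "(\<Sum>(u, v)\<in>UNIV. c (u, v) * degree \<alpha> u * degree \<beta> v)"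
    have eq: "joining_cost c \<gamma> = ?m" if "weight_joining \<alpha> \<beta> \<gamma>" for \<gamma>
    proof -
      have "\<forall>u v. degree \<gamma> (u, v) = degree \<alpha> u * degree \<beta> v"
        using wd that unfolding weakly_disjoint_def by blast
      then show ?thesis unfolding joining_cost_def
        by (intro sum.cong) (auto simp: mult.assoc)
    qed
    show "c_disjoint \<alpha> \<beta> c"
      unfolding c_disjoint_def Let_def
      using eq prod_joining[OF assms] by auto
  qed
next
  assume H: "\<forall>c :: 'u \<times> 'v \<Rightarrow> real. (\<forall>x. c x \<ge> 0) \<longrightarrow> c_disjoint \<alpha> \<beta> c"
  show "weakly_disjoint \<alpha> \<beta>"
    unfolding weakly_disjoint_def
  proof (intro allI impI)
    fix \<gamma> u v assume j: "weight_joining \<alpha> \<beta> \<gamma>"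
    let ?r = "degree \<gamma>" and ?pq = "\<lambda>(u,v). degree \<alpha> u * degree \<beta> v"
    have sr: "sum ?r UNIV = 1" using j by (simp add: weight_joining_def weight_fun_def degree_def)
    have sa: "(\<Sum>u\<in>UNIV. degree \<alpha> u) = 1" using assms(1) by (simp add: weight_fun_def degree_def)
    have sb: "(\<Sum>u\<in>UNIV. degree \<beta> u) = 1" using assms(2) by (simp add: weight_fun_def degree_def)
    have spq: "sum ?pq UNIV = 1"
      using sa sb by (simp add: sum_UNIV_prod sum_product[symmetric])
    have ge: "?pq x \<le> ?r x" for x
    proof -
      define c where "c = (\<lambda>y. if y = x then (1::real) else 0)"
      have "c_disjoint \<alpha> \<beta> c" using H by (simp add: c_def)
      then have "(\<Sum>(u, v)\<in>UNIV. c (u, v) * degree \<alpha> u * degree \<beta> v) \<le> joining_cost c \<gamma>"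
        unfolding c_disjoint_def Let_def using j by blast
      moreover have "(\<Sum>(u, v)\<in>UNIV. c (u, v) * degree \<alpha> u * degree \<beta> v) = ?pq x"
      proof -
        have "(\<Sum>(u, v)\<in>UNIV. c (u, v) * degree \<alpha> u * degree \<beta> v)
            = (\<Sum>y\<in>UNIV. if y = x then ?pq y else 0)"
          by (intro sum.cong) (auto simp: c_def)
        also have "\<dots> = ?pq x" by (simp add: sum.delta')
        finally show ?thesis .
      qed
      moreover have "joining_cost c \<gamma> = ?r x"
      proof -
        have "joining_cost c \<gamma> = (\<Sum>y\<in>UNIV. if y = x then ?r y else 0)"
          unfolding joining_cost_def by (intro sum.cong) (auto simp: c_def)
        also have "\<dots> = ?r x" by (simp add: sum.delta')
        finally show ?thesis .
      qed
      ultimately show ?thesis by simp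
    qed
    have "sum (\<lambda>x. ?r x - ?pq x) UNIV = 0" using sr spq by (simp add: sum_subtractf)
    then have "\<forall>x\<in>UNIV. ?r x - ?pq x = 0"
      by (subst (asm) sum_nonneg_eq_0_iff) (auto simp: ge)
    then show "degree \<gamma> (u, v) = degree \<alpha> u * degree \<beta> v"
      by (metis (mono_tags, lifting) UNIV_I case_prod_conv eq_iff_diff_eq_0)
  qed
qed

end
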